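(* Fix $p\in(1,\infty)$ and Radon measures $\mu,\nu$ on $\mathbb{R}^N$. Let $K$ be a singular kernel on $\mathbb{R}^N$ (with respect to $\mu,\nu$) which is restrictedly $L^p$ bounded with bound $C$. Let $\rho\in L^1(\mathbb{R}^N,dx)$, and put $M=1-\widehat\rho$ and $M_\varepsilon(x):=M(x/\varepsilon)$ for $\varepsilon>0$. Then for every $\varepsilon>0$ the kernel $K_\varepsilon(s,t):=K(s,t)M_\varepsilon(t-s)$ is restrictedly $L^p$ bounded with bound $(1+\|\rho\|_{L^1(dx)})\,C$.
   Context: A singular kernel on $\mathbb{R}^N$ (with respect to Radon measures $\mu,\nu$) is a $\mu\times\nu$-measurable (complex-valued) function $K$ on $\mathbb{R}^N\times\mathbb{R}^N$ which is locally in $L^2(\mu\times\nu)$ off the diagonal $\{(s,t):s=t\}$. Such a kernel is restrictedly $L^p$ bounded with bound $C$ (i.e. as a formal operator $L^p(\mu)\to L^p(\nu)$) if $\left|\int K(s,t)f(t)g(s)\,d\mu(t)\,d\nu(s)\right|\le C\|f\|_{L^p(\mu)}\|g\|_{L^{p'}(\nu)}$, $1/p+1/p'=1$, for all bounded Borel functions $f,g$ with compact supports satisfying $\operatorname{dist}(\operatorname{supp}f,\operatorname{supp}g)>0$. The Fourier transform is $\widehat\rho(s)=\int_{\mathbb{R}^N}\rho(x)e^{-is\cdot x}\,dx$. *)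

theory Defs
  imports "HOL-Analysis.Analysis"
begin

text \<open>Radon measure on the Euclidean space 'a: a Borel measure which is finite on compact sets
  (on R^N local finiteness implies regularity).\<close>
definition radon_measure :: "'a::euclidean_space measure \<Rightarrow> bool" where
  "radon_measure M \<longleftrightarrow> sets M = sets borel \<and> (\<forall>A. compact A \<longrightarrow> emeasure M A < \<infinity>)"

definition kernel_measure :: "'a::euclidean_space measure \<Rightarrow> 'a measure \<Rightarrow> ('a \<times> 'a) measure" where
  "kernel_measure \<mu> \<nu> = completion (\<nu> \<Otimes>\<^sub>M \<mu>)"

definition singular_kernel ::
  "'a::euclidean_space measure \<Rightarrow> 'a measure \<Rightarrow> ('a \<Rightarrow> 'a \<Rightarrow> complex) \<Rightarrow> bool" where
  "singular_kernel \<mu> \<nu> K \<longleftrightarrow>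
     (\<lambda>z. K (fst z) (snd z)) \<in> borel_measurable (kernel_measure \<mu> \<nu>) \<and>
     (\<forall>Q. compact Q \<and> Q \<inter> {z. fst z = snd z} = {} \<longrightarrow>
        (\<integral>\<^sup>+ z. ennreal ((norm (K (fst z) (snd z)))\<^sup>2) * indicator Q z \<partial>kernel_measure \<mu> \<nu>) < \<infinity>)"

definition fsupp :: "('a::euclidean_space \<Rightarrow> complex) \<Rightarrow> 'a set" where
  "fsupp f = closure {x. f x \<noteq> 0}"

definition Lp_norm :: "real \<Rightarrow> 'a measure \<Rightarrow> ('a \<Rightarrow> complex) \<Rightarrow> real" where
  "Lp_norm p M f = (\<integral> x. norm (f x) powr p \<partial>M) powr (1 / p)"

definition test_fun :: "('a::euclidean_space \<Rightarrow> complex) \<Rightarrow> bool" where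
  "test_fun f \<longleftrightarrow> f \<in> borel_measurable borel \<and> bounded (range f) \<and> compact (fsupp f)"

definition restrictedly_Lp_bounded ::
  "real \<Rightarrow> 'a::euclidean_space measure \<Rightarrow> 'a measure \<Rightarrow> ('a \<Rightarrow> 'a \<Rightarrow> complex) \<Rightarrow> real \<Rightarrow> bool" where
  "restrictedly_Lp_bounded p \<mu> \<nu> K C \<longleftrightarrow>
     (\<forall>f g. test_fun f \<and> test_fun g \<and>
        (\<exists>\<delta>>0. \<forall>x\<in>fsupp f. \<forall>y\<in>fsupp g. \<delta> \<le> dist x y) \<longrightarrow>
        norm (\<integral> z. K (fst z) (snd z) * f (snd z) * g (fst z) \<partial>kernel_measure \<mu> \<nu>)
          \<le> C * Lp_norm p \<mu> f * Lp_norm (p / (p - 1)) \<nu> g)"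

definition fourier :: "('a::euclidean_space \<Rightarrow> complex) \<Rightarrow> 'a \<Rightarrow> complex" where
  "fourier \<rho> s = (\<integral> x. \<rho> x * cis (- (s \<bullet> x)) \<partial>lborel)"

definition L1_norm :: "('a::euclidean_space \<Rightarrow> complex) \<Rightarrow> real" where
  "L1_norm \<rho> = (\<integral> x. norm (\<rho> x) \<partial>lborel)"

end

theory Submission
  imports Defs
begin

lemma radon_sigma_finite:
  fixes M :: "'a::euclidean_space measure"
  assumes "radon_measure M" shows "sigma_finite_measure M"
proof -
  have s: "sets M = sets borel" and c: "\<And>A. compact A \<Longrightarrow> emeasure M A < \<infinity>"
    using assms by (auto simp: radon_measure_def)
  have sp: "space M = UNIV" using sets_eq_imp_space_eq[OF s] by simp
  show ?thesis unfolding sigma_finite_measure_def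
  proof (intro exI[of _ "range (\<lambda>n::nat. cball 0 (real n))"] conjI)
    show "range (\<lambda>n::nat. cball (0::'a) (real n)) \<subseteq> sets M"
    proof
      fix a assume "a \<in> range (\<lambda>n::nat. cball (0::'a) (real n))"
      then obtain n :: nat where "a = cball 0 (real n)" by blast
      then show "a \<in> sets M" unfolding s by (simp add: borel_closed)
    qed
    show "\<Union> (range (\<lambda>n::nat. cball (0::'a) (real n))) = space M"
    proof -
      have "x \<in> cball 0 (real (nat \<lceil>norm x\<rceil>))" for x :: 'a
        using real_nat_ceiling_ge[of "norm x"] by (simp add: dist_norm)
      then show ?thesis unfolding sp by blast
    qed
    show "\<forall>a\<in>range (\<lambda>n::nat. cball (0::'a) (real n)). emeasure M a \<noteq> \<infinity>"
    proof
      fix a assume "a \<in> range (\<lambda>n::nat. cball (0::'a) (real n))"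
      then have "compact a" by auto
      then have "emeasure M a < \<infinity>" by (rule c)
      then show "emeasure M a \<noteq> \<infinity>" by (rule less_imp_neq)
    qed
    show "countable (range (\<lambda>n::nat. cball (0::'a) (real n)))" by simp
  qed
qed

lemma completion_sigma_finite:
  assumes "sigma_finite_measure M" shows "sigma_finite_measure (completion M)"
proof -
  obtain A where "countable A" "A \<subseteq> sets M" "\<Union> A = space M" "\<forall>a\<in>A. emeasure M a \<noteq> \<infinity>"
    using sigma_finite_measure.sigma_finite_countable[OF assms] by blast
  then show ?thesis unfolding sigma_finite_measure_def
    by (intro exI[of _ A]) auto
qed

lemma km_sigma_finite:
  assumes "radon_measure \<mu>" "radon_measure \<nu>"
  shows "sigma_finite_measure (kernel_measure \<mu> \<nu>)"
proof -
  interpret pair_sigma_finite \<nu> \<mu> using radon_sigma_finite assms by (auto intro: pair_sigma_finite.intro)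
  show ?thesis unfolding kernel_measure_def
    by (intro completion_sigma_finite) (rule sigma_finite_measure_axioms)
qed

lemma sets_pair_radon:
  assumes "radon_measure \<mu>" "radon_measure \<nu>"
  shows "sets (\<nu> \<Otimes>\<^sub>M \<mu>) = sets (borel :: ('a::euclidean_space \<times> 'a) measure)"
proof -
  have "sets (\<nu> \<Otimes>\<^sub>M \<mu>) = sets (borel \<Otimes>\<^sub>M (borel :: 'a measure))"
    using assms by (intro sets_pair_measure_cong) (auto simp: radon_measure_def)
  then show ?thesis by (subst (asm) borel_prod)
qed

lemma km_meas:
  assumes "radon_measure \<mu>" "radon_measure \<nu>"
    and "h \<in> borel_measurable (borel :: ('a::euclidean_space \<times> 'a) measure)"
  shows "h \<in> borel_measurable (kernel_measure \<mu> \<nu>)"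
  unfolding kernel_measure_def
  by (rule measurable_completion) (simp add: measurable_cong_sets[OF sets_pair_radon[OF assms(1,2)] refl] assms(3))

lemma km_sets:
  assumes "radon_measure \<mu>" "radon_measure \<nu>" "Q \<in> sets (borel :: ('a::euclidean_space \<times> 'a) measure)"
  shows "Q \<in> sets (kernel_measure \<mu> \<nu>)"
  using assms sets_pair_radon[OF assms(1,2)] unfolding kernel_measure_def by auto

lemma fourier_meas:
  fixes \<rho> :: "'a::euclidean_space \<Rightarrow> complex"
  assumes "integrable lborel \<rho>"
  shows "fourier \<rho> \<in> borel_measurable borel"
proof -
  have r: "\<rho> \<in> borel_measurable borel" using borel_measurable_integrable[OF assms] by simp
  have sb: "sets (borel \<Otimes>\<^sub>M lborel) = sets (borel :: ('a \<times> 'a) measure)"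
  proof -
    have "sets (borel \<Otimes>\<^sub>M lborel) = sets (borel \<Otimes>\<^sub>M (borel::'a measure))"
      by (rule sets_pair_measure_cong) simp_all
    also have "\<dots> = sets (borel :: ('a \<times> 'a) measure)" by (subst borel_prod) (rule refl)
    finally show ?thesis .
  qed
  have c: "(\<lambda>z::'a\<times>'a. cis (- (fst z \<bullet> snd z))) \<in> borel_measurable borel"
    by (intro borel_measurable_continuous_onI continuous_intros)
  have "(\<lambda>(s,x). \<rho> x * cis (- (s \<bullet> x))) \<in> borel_measurable (borel \<Otimes>\<^sub>M lborel)"
  proof -
    have "(\<lambda>z::'a\<times>'a. \<rho> (snd z)) \<in> borel_measurable (borel \<Otimes>\<^sub>M lborel)"
      using r by measurable
    moreover have "(\<lambda>z::'a\<times>'a. cis (- (fst z \<bullet> snd z))) \<in> borel_measurable (borel \<Otimes>\<^sub>M lborel)"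
      by (subst measurable_cong_sets[OF sb refl]) (rule c)
    ultimately show ?thesis by (simp add: case_prod_beta)
  qed
  then show ?thesis unfolding fourier_def
    by (intro sigma_finite_measure.borel_measurable_lebesgue_integral) (auto intro: sigma_finite_lborel)
qed

lemma fourier_bound:
  fixes \<rho> :: "'a::euclidean_space \<Rightarrow> complex"
  shows "norm (fourier \<rho> s) \<le> L1_norm \<rho>"
  unfolding fourier_def L1_norm_def
  using integral_norm_bound[of lborel "\<lambda>x. \<rho> x * cis (- (s \<bullet> x))"]
  by (simp add: norm_mult)


lemma aux_sq: "(x::real) \<le> 1 + x\<^sup>2"
proof -
  have "0 \<le> (x - 1/2)\<^sup>2" by simp
  then show ?thesis by (simp add: power2_eq_square algebra_simps)
qed

lemma fin_aux2: "(a::ennreal) < \<infinity> \<Longrightarrow> b < \<infinity> \<Longrightarrow> a * b < \<infinity>"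
  unfolding infinity_ennreal_def ennreal_mult_less_top by blast
lemma fin_aux: "(a::ennreal) < \<infinity> \<Longrightarrow> b < \<infinity> \<Longrightarrow> ennreal c * (a + b) < \<infinity>"
  by (rule fin_aux2) (unfold infinity_ennreal_def ennreal_add_less_top, simp_all)

lemma cont_meas: "continuous_on UNIV h \<Longrightarrow> h \<in> borel_measurable borel"
  by (rule borel_measurable_continuous_onI)

lemma supp_sub: "f x \<noteq> 0 \<Longrightarrow> x \<in> fsupp f"
  unfolding fsupp_def by (rule subsetD[OF closure_subset]) simp

lemma H_integrable:
  fixes f g :: "'a::euclidean_space \<Rightarrow> complex"
  assumes rm: "radon_measure \<mu>" "radon_measure \<nu>" and sk: "singular_kernel \<mu> \<nu> K"
   and tf: "test_fun f" "test_fun g" and d: "\<delta> > 0" "\<forall>x\<in>fsupp f. \<forall>y\<in>fsupp g. \<delta> \<le> dist x y"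
  shows "integrable (kernel_measure \<mu> \<nu>) (\<lambda>z. K (fst z) (snd z) * f (snd z) * g (fst z))"
proof -
  let ?Km = "kernel_measure \<mu> \<nu>"
  let ?H = "\<lambda>z. K (fst z) (snd z) * f (snd z) * g (fst z)"
  define Q where "Q = fsupp g \<times> fsupp f"
  have cf: "compact (fsupp f)" "compact (fsupp g)" using tf by (auto simp: test_fun_def)
  have cQ: "compact Q" using cf by (auto simp: Q_def intro: compact_Times)
  have dQ: "Q \<inter> {z. fst z = snd z} = {}"
  proof (rule equals0I)
    fix z assume z: "z \<in> Q \<inter> {z. fst z = snd z}"
    then have "snd z \<in> fsupp f" "fst z \<in> fsupp g" by (auto simp: Q_def mem_Times_iff)
    then have "\<delta> \<le> dist (snd z) (fst z)" using d(2) by blast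
    moreover have "fst z = snd z" using z by simp
    ultimately show False using d(1) by simp
  qed
  have fin: "(\<integral>\<^sup>+z. ennreal ((norm (K (fst z) (snd z)))\<^sup>2) * indicator Q z \<partial>?Km) < \<infinity>"
  proof -
    have "\<forall>Q. compact Q \<and> Q \<inter> {z. fst z = snd z} = {} \<longrightarrow>
        (\<integral>\<^sup>+ z. ennreal ((norm (K (fst z) (snd z)))\<^sup>2) * indicator Q z \<partial>kernel_measure \<mu> \<nu>) < \<infinity>"
      using sk unfolding singular_kernel_def by (rule conjunct2)
    then show ?thesis using cQ dQ by simp
  qed
  have Kmeas[measurable]: "(\<lambda>z. K (fst z) (snd z)) \<in> borel_measurable ?Km"
    using sk by (simp add: singular_kernel_def)
  have fm: "f \<in> borel_measurable borel" "g \<in> borel_measurable borel" using tf by (auto simp: test_fun_def)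
  have snd_m: "snd \<in> borel_measurable (borel :: ('a\<times>'a) measure)"
    by (intro cont_meas continuous_intros)
  have fst_m: "fst \<in> borel_measurable (borel :: ('a\<times>'a) measure)"
    by (intro cont_meas continuous_intros)
  have fsm[measurable]: "(\<lambda>z. f (snd z)) \<in> borel_measurable ?Km" "(\<lambda>z. g (fst z)) \<in> borel_measurable ?Km"
    using measurable_compose[OF snd_m fm(1)] measurable_compose[OF fst_m fm(2)]
    by (auto intro!: km_meas[OF rm])
  have Hm: "?H \<in> borel_measurable ?Km" by measurable
  have Qb: "Q \<in> sets (borel :: ('a\<times>'a) measure)" using cQ by (simp add: compact_imp_closed)
  have Qs: "Q \<in> sets ?Km" using km_sets[OF rm Qb] .
  obtain Bf where Bf: "\<And>x. norm (f x) \<le> Bf" using tf by (auto simp: test_fun_def bounded_iff)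
  obtain Bg where Bg: "\<And>x. norm (g x) \<le> Bg" using tf by (auto simp: test_fun_def bounded_iff)
  have Bf0: "0 \<le> Bf" using Bf[of 0] norm_ge_zero[of "f 0"] by linarith
  have Bg0: "0 \<le> Bg" using Bg[of 0] norm_ge_zero[of "g 0"] by linarith
  have pt: "ennreal (norm (?H z)) \<le> ennreal (Bf*Bg) * (indicator Q z + ennreal ((norm (K (fst z) (snd z)))\<^sup>2) * indicator Q z)" for z
  proof (cases "z \<in> Q")
    case True
    let ?k = "norm (K (fst z) (snd z))"
    have k: "?k \<le> 1 + ?k\<^sup>2" by (rule aux_sq)
    have "norm (?H z) = ?k * norm (f (snd z)) * norm (g (fst z))" by (simp add: norm_mult)
    also have "\<dots> \<le> ?k * Bf * Bg" by (intro mult_mono Bf Bg) (auto simp: Bf0)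
    also have "\<dots> \<le> (1 + ?k\<^sup>2) * Bf * Bg" using k Bf0 Bg0 by (intro mult_right_mono) auto
    finally have "norm (?H z) \<le> Bf * Bg * (1 + ?k\<^sup>2)" by (simp add: algebra_simps)
    then have "ennreal (norm (?H z)) \<le> ennreal (Bf * Bg * (1 + ?k\<^sup>2))" by (rule ennreal_leI)
    also have "\<dots> = ennreal (Bf*Bg) * (1 + ennreal (?k\<^sup>2))"
    proof -
      have e: "ennreal (1 + ?k\<^sup>2) = 1 + ennreal (?k\<^sup>2)" by (subst ennreal_plus) auto
      have "ennreal (Bf * Bg * (1 + ?k\<^sup>2)) = ennreal (Bf*Bg) * ennreal (1 + ?k\<^sup>2)"
        using Bf0 Bg0 by (intro ennreal_mult) auto
      then show ?thesis by (simp only: e)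
    qed
    finally have "ennreal (norm (?H z)) \<le> ennreal (Bf*Bg) * (1 + ennreal (?k\<^sup>2))" .
    moreover have "indicator Q z = (1::ennreal)" using True by simp
    ultimately show ?thesis by (simp only: mult_1_right)
  next
    case False
    then have "f (snd z) = 0 \<or> g (fst z) = 0" using supp_sub[of f] supp_sub[of g]
      by (cases z) (auto simp: Q_def)
    then show ?thesis by auto
  qed
  have "(\<integral>\<^sup>+z. ennreal (norm (?H z)) \<partial>?Km) \<le>
     (\<integral>\<^sup>+z. ennreal (Bf*Bg) * (indicator Q z + ennreal ((norm (K (fst z) (snd z)))\<^sup>2) * indicator Q z) \<partial>?Km)"
    by (intro nn_integral_mono pt)
  also have "\<dots> = ennreal (Bf*Bg) * (emeasure ?Km Q + (\<integral>\<^sup>+z. ennreal ((norm (K (fst z) (snd z)))\<^sup>2) * indicator Q z \<partial>?Km))"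
  proof -
    have m1: "(\<lambda>z. indicator Q z :: ennreal) \<in> borel_measurable ?Km" using Qs by simp
    have m2: "(\<lambda>z. ennreal ((norm (K (fst z) (snd z)))\<^sup>2) * indicator Q z) \<in> borel_measurable ?Km"
      using Qs by measurable
    have "(\<integral>\<^sup>+z. ennreal (Bf*Bg) * (indicator Q z + ennreal ((norm (K (fst z) (snd z)))\<^sup>2) * indicator Q z) \<partial>?Km)
       = ennreal (Bf*Bg) * (\<integral>\<^sup>+z. (indicator Q z + ennreal ((norm (K (fst z) (snd z)))\<^sup>2) * indicator Q z) \<partial>?Km)"
      by (rule nn_integral_cmult[OF borel_measurable_add[OF m1 m2]])
    also have "(\<integral>\<^sup>+z. (indicator Q z + ennreal ((norm (K (fst z) (snd z)))\<^sup>2) * indicator Q z) \<partial>?Km)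
       = (\<integral>\<^sup>+z. indicator Q z \<partial>?Km) + (\<integral>\<^sup>+z. ennreal ((norm (K (fst z) (snd z)))\<^sup>2) * indicator Q z \<partial>?Km)"
      by (rule nn_integral_add[OF m1 m2])
    also have "(\<integral>\<^sup>+z. indicator Q z \<partial>?Km) = emeasure ?Km Q"
      using nn_integral_indicator[OF Qs] by simp
    finally show ?thesis .
  qed
  also have "\<dots> < \<infinity>"
  proof -
    interpret pair_sigma_finite \<nu> \<mu> using radon_sigma_finite rm by (auto intro: pair_sigma_finite.intro)
    have s1: "fsupp g \<in> sets \<nu>" "fsupp f \<in> sets \<mu>" using rm cf
      by (auto simp: radon_measure_def compact_imp_closed)
    have "emeasure ?Km Q = emeasure (\<nu> \<Otimes>\<^sub>M \<mu>) Q" unfolding kernel_measure_def Q_def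
      using s1 by (simp add: pair_measureI)
    also have "\<dots> = emeasure \<nu> (fsupp g) * emeasure \<mu> (fsupp f)"
      unfolding Q_def using s1 by (rule M2.emeasure_pair_measure_Times)
    also have "\<dots> < \<infinity>"
      using rm cf by (intro fin_aux2) (auto simp: radon_measure_def)
    finally have "emeasure ?Km Q < \<infinity>" .
    then show ?thesis by (rule fin_aux[OF _ fin])
  qed
  finally show ?thesis by (rule integrableI_bounded[OF Hm])
qed


lemma twist:
  fixes f :: "'a::euclidean_space \<Rightarrow> complex"
  assumes tf: "test_fun f" and th: "continuous_on UNIV \<theta>"
  shows "test_fun (\<lambda>t. f t * cis (\<theta> t))" "fsupp (\<lambda>t. f t * cis (\<theta> t)) = fsupp f"
    "Lp_norm q M (\<lambda>t. f t * cis (\<theta> t)) = Lp_norm q M f"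
proof -
  have ne: "norm (f t * cis (\<theta> t)) = norm (f t)" for t by (simp add: norm_mult)
  show fs: "fsupp (\<lambda>t. f t * cis (\<theta> t)) = fsupp f" unfolding fsupp_def by simp
  show "Lp_norm q M (\<lambda>t. f t * cis (\<theta> t)) = Lp_norm q M f" unfolding Lp_norm_def ne ..
  have fm: "f \<in> borel_measurable borel" and bd: "bounded (range f)" and cp: "compact (fsupp f)"
    using tf unfolding test_fun_def by simp_all
  have cm: "(\<lambda>t. cis (\<theta> t)) \<in> borel_measurable borel"
    by (intro cont_meas continuous_intros th)
  obtain B where B: "\<And>x. norm (f x) \<le> B" using bd by (auto simp: bounded_iff)
  have "bounded (range (\<lambda>t. f t * cis (\<theta> t)))" unfolding bounded_iff
  proof (intro exI[of _ B] ballI)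
    fix y assume "y \<in> range (\<lambda>t. f t * cis (\<theta> t))"
    then obtain t where "y = f t * cis (\<theta> t)" by (elim imageE) simp
    then have "norm y = norm (f t)" using ne by simp
    also have "\<dots> \<le> B" by (rule B)
    finally show "norm y \<le> B" .
  qed
  then show "test_fun (\<lambda>t. f t * cis (\<theta> t))" unfolding test_fun_def fs
    using borel_measurable_times[OF fm cm] cp by simp
qed


lemma fin_aux3: "(b::ennreal) < \<infinity> \<Longrightarrow> ennreal c * b < \<infinity>"
  by (rule fin_aux2) simp_all

lemma phi_meas:
  fixes \<rho> :: "'a::euclidean_space \<Rightarrow> complex"
  assumes rm: "radon_measure \<mu>" "radon_measure \<nu>" and ri: "integrable lborel \<rho>"
  shows "(\<lambda>z. fourier \<rho> ((1 / \<epsilon>) *\<^sub>R (snd z - fst z))) \<in> borel_measurable (kernel_measure \<mu> \<nu>)"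
proof -
  have "(\<lambda>z::'a\<times>'a. (1/\<epsilon>) *\<^sub>R (snd z - fst z)) \<in> borel_measurable borel"
    by (intro cont_meas continuous_intros)
  then have "(\<lambda>z. fourier \<rho> ((1 / \<epsilon>) *\<^sub>R (snd z - fst z))) \<in> borel_measurable borel"
    by (rule measurable_compose[OF _ fourier_meas[OF ri]])
  then show ?thesis by (rule km_meas[OF rm])
qed

lemma part1:
  fixes \<mu> \<nu> :: "'a::euclidean_space measure"
    and K :: "'a \<Rightarrow> 'a \<Rightarrow> complex" and \<rho> :: "'a \<Rightarrow> complex"
  assumes rm: "radon_measure \<mu>" "radon_measure \<nu>"
    and sk: "singular_kernel \<mu> \<nu> K"
    and ri: "integrable lborel \<rho>"
  shows "singular_kernel \<mu> \<nu> (\<lambda>s t. K s t * (1 - fourier \<rho> ((1 / \<epsilon>) *\<^sub>R (t - s))))"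
proof -
  let ?Km = "kernel_measure \<mu> \<nu>"
  let ?L = "L1_norm \<rho>"
  define \<phi> where "\<phi> z = fourier \<rho> ((1 / \<epsilon>) *\<^sub>R (snd z - fst z))" for z :: "'a \<times> 'a"
  have Kmeas[measurable]: "(\<lambda>z. K (fst z) (snd z)) \<in> borel_measurable ?Km"
    using sk unfolding singular_kernel_def by (rule conjunct1)
  have phm[measurable]: "\<phi> \<in> borel_measurable ?Km"
    unfolding \<phi>_def[abs_def] by (rule phi_meas[OF rm ri])
  have kfin: "\<forall>Q. compact Q \<and> Q \<inter> {z. fst z = snd z} = {} \<longrightarrow>
        (\<integral>\<^sup>+ z. ennreal ((norm (K (fst z) (snd z)))\<^sup>2) * indicator Q z \<partial>?Km) < \<infinity>"
    using sk unfolding singular_kernel_def by (rule conjunct2)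
  have m: "(\<lambda>z. K (fst z) (snd z) * (1 - \<phi> z)) \<in> borel_measurable ?Km" by measurable
  have pb: "norm (1 - \<phi> z) \<le> 1 + ?L" for z
  proof -
    have "norm (1 - \<phi> z) \<le> norm (1::complex) + norm (\<phi> z)" by (rule norm_triangle_ineq4)
    also have "norm (\<phi> z) \<le> ?L" unfolding \<phi>_def by (rule fourier_bound)
    finally show ?thesis by simp
  qed
  show ?thesis unfolding singular_kernel_def
  proof (intro conjI allI impI)
    show "(\<lambda>z. K (fst z) (snd z) * (1 - fourier \<rho> ((1 / \<epsilon>) *\<^sub>R (snd z - fst z)))) \<in> borel_measurable ?Km"
      using m unfolding \<phi>_def .
    fix Q :: "('a \<times> 'a) set" assume Q: "compact Q \<and> Q \<inter> {z. fst z = snd z} = {}"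
    have fin: "(\<integral>\<^sup>+ z. ennreal ((norm (K (fst z) (snd z)))\<^sup>2) * indicator Q z \<partial>?Km) < \<infinity>"
      using kfin Q by simp
    have Qs: "Q \<in> sets ?Km" using Q by (intro km_sets[OF rm]) (simp add: compact_imp_closed)
    have m2: "(\<lambda>z. ennreal ((norm (K (fst z) (snd z)))\<^sup>2) * indicator Q z) \<in> borel_measurable ?Km"
      using Qs by measurable
    have pt: "ennreal ((norm (K (fst z) (snd z) * (1 - \<phi> z)))\<^sup>2) * indicator Q z
        \<le> ennreal ((1 + ?L)\<^sup>2) * (ennreal ((norm (K (fst z) (snd z)))\<^sup>2) * indicator Q z)" for z
    proof (cases "z \<in> Q")
      case True
      have "(norm (K (fst z) (snd z) * (1 - \<phi> z)))\<^sup>2 = (norm (K (fst z) (snd z)))\<^sup>2 * (norm (1 - \<phi> z))\<^sup>2"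
        by (simp add: norm_mult power_mult_distrib)
      also have "\<dots> \<le> (norm (K (fst z) (snd z)))\<^sup>2 * (1 + ?L)\<^sup>2"
        by (intro mult_left_mono power_mono pb) simp_all
      finally have r: "(norm (K (fst z) (snd z) * (1 - \<phi> z)))\<^sup>2 \<le> (1 + ?L)\<^sup>2 * (norm (K (fst z) (snd z)))\<^sup>2"
        by (simp only: mult.commute)
      have "ennreal ((norm (K (fst z) (snd z) * (1 - \<phi> z)))\<^sup>2) \<le> ennreal ((1 + ?L)\<^sup>2 * (norm (K (fst z) (snd z)))\<^sup>2)"
        using r by (rule ennreal_leI)
      also have "\<dots> = ennreal ((1 + ?L)\<^sup>2) * ennreal ((norm (K (fst z) (snd z)))\<^sup>2)"
        by (rule ennreal_mult) simp_all
      finally have "ennreal ((norm (K (fst z) (snd z) * (1 - \<phi> z)))\<^sup>2) \<le> ennreal ((1 + ?L)\<^sup>2) * ennreal ((norm (K (fst z) (snd z)))\<^sup>2)" .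
      moreover have "indicator Q z = (1::ennreal)" using True by simp
      ultimately show ?thesis by (simp only: mult_1_right)
    next
      case False
      then have "indicator Q z = (0::ennreal)" by simp
      then show ?thesis by (simp only: mult_zero_right order_refl)
    qed
    have "(\<integral>\<^sup>+ z. ennreal ((norm (K (fst z) (snd z) * (1 - \<phi> z)))\<^sup>2) * indicator Q z \<partial>?Km)
        \<le> (\<integral>\<^sup>+ z. ennreal ((1 + ?L)\<^sup>2) * (ennreal ((norm (K (fst z) (snd z)))\<^sup>2) * indicator Q z) \<partial>?Km)"
      by (rule nn_integral_mono) (rule pt)
    also have "\<dots> = ennreal ((1 + ?L)\<^sup>2) * (\<integral>\<^sup>+ z. ennreal ((norm (K (fst z) (snd z)))\<^sup>2) * indicator Q z \<partial>?Km)"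
      by (rule nn_integral_cmult[OF m2])
    also have "\<dots> < \<infinity>" by (rule fin_aux3[OF fin])
    finally show "(\<integral>\<^sup>+ z. ennreal ((norm (K (fst z) (snd z) * (1 - fourier \<rho> ((1 / \<epsilon>) *\<^sub>R (snd z - fst z)))))\<^sup>2) * indicator Q z \<partial>?Km) < \<infinity>"
      unfolding \<phi>_def .
  qed
qed


lemma cis_split:
  fixes x s t :: "'a::euclidean_space"
  shows "cis (- (((1 / \<epsilon>) *\<^sub>R (t - s)) \<bullet> x)) = cis (- ((1 / \<epsilon>) * (t \<bullet> x))) * cis ((1 / \<epsilon>) * (s \<bullet> x))"
proof -
  have "- (((1 / \<epsilon>) *\<^sub>R (t - s)) \<bullet> x) = - ((1 / \<epsilon>) * (t \<bullet> x)) + (1 / \<epsilon>) * (s \<bullet> x)"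
    by (simp add: inner_diff_left algebra_simps)
  then show ?thesis by (simp only: cis_mult)
qed

lemma F_meas:
  fixes \<rho> :: "'a::euclidean_space \<Rightarrow> complex"
  assumes rm: "radon_measure \<mu>" "radon_measure \<nu>" and ri: "integrable lborel \<rho>"
    and Hm: "H \<in> borel_measurable (kernel_measure \<mu> \<nu>)"
  shows "(\<lambda>w. \<rho> (fst w) * cis (- (((1 / \<epsilon>) *\<^sub>R (snd (snd w) - fst (snd w))) \<bullet> fst w)) * H (snd w))
     \<in> borel_measurable (lborel \<Otimes>\<^sub>M kernel_measure \<mu> \<nu>)"
proof -
  let ?Km = "kernel_measure \<mu> \<nu>"
  have rb: "\<rho> \<in> borel_measurable lborel" using borel_measurable_integrable[OF ri] .
  have m1: "(\<lambda>w. \<rho> (fst w)) \<in> borel_measurable (lborel \<Otimes>\<^sub>M ?Km)"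
    by (rule measurable_compose[OF measurable_fst rb])
  have m3: "(\<lambda>w. H (snd w)) \<in> borel_measurable (lborel \<Otimes>\<^sub>M ?Km)"
    by (rule measurable_compose[OF measurable_snd Hm])
  have idK: "(\<lambda>x. x) \<in> ?Km \<rightarrow>\<^sub>M (\<nu> \<Otimes>\<^sub>M \<mu>)"
    unfolding kernel_measure_def by (rule measurable_completion[OF measurable_ident_sets[OF refl]])
  have idm: "(\<lambda>w. (fst w, snd w)) \<in> (lborel \<Otimes>\<^sub>M ?Km) \<rightarrow>\<^sub>M (lborel \<Otimes>\<^sub>M (\<nu> \<Otimes>\<^sub>M \<mu>))"
    by (rule measurable_Pair[OF measurable_fst measurable_compose[OF measurable_snd idK]])
  have sbb: "sets (lborel \<Otimes>\<^sub>M (\<nu> \<Otimes>\<^sub>M \<mu>)) = sets (borel :: ('a \<times> ('a \<times> 'a)) measure)"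
  proof -
    have "sets (lborel \<Otimes>\<^sub>M (\<nu> \<Otimes>\<^sub>M \<mu>)) = sets (borel \<Otimes>\<^sub>M (borel :: ('a \<times> 'a) measure))"
      by (rule sets_pair_measure_cong) (simp_all add: sets_pair_radon[OF rm])
    also have "\<dots> = sets (borel :: ('a \<times> ('a \<times> 'a)) measure)" by (subst borel_prod) (rule refl)
    finally show ?thesis .
  qed
  have c0: "(\<lambda>w::'a \<times> ('a \<times> 'a). cis (- (((1 / \<epsilon>) *\<^sub>R (snd (snd w) - fst (snd w))) \<bullet> fst w)))
       \<in> borel_measurable borel"
    by (intro cont_meas continuous_intros)
  have c1: "(\<lambda>w::'a \<times> ('a \<times> 'a). cis (- (((1 / \<epsilon>) *\<^sub>R (snd (snd w) - fst (snd w))) \<bullet> fst w)))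
       \<in> borel_measurable (lborel \<Otimes>\<^sub>M (\<nu> \<Otimes>\<^sub>M \<mu>))"
    by (subst measurable_cong_sets[OF sbb refl]) (rule c0)
  have m2: "(\<lambda>w. cis (- (((1 / \<epsilon>) *\<^sub>R (snd (snd w) - fst (snd w))) \<bullet> fst w)))
       \<in> borel_measurable (lborel \<Otimes>\<^sub>M ?Km)"
    using measurable_compose[OF idm c1] by simp
  show ?thesis by (intro borel_measurable_times m1 m2 m3)
qed


lemma part2:
  fixes \<mu> \<nu> :: "'a::euclidean_space measure"
    and K :: "'a \<Rightarrow> 'a \<Rightarrow> complex" and \<rho> :: "'a \<Rightarrow> complex"
    and p C \<epsilon> :: real
  assumes rm: "radon_measure \<mu>" "radon_measure \<nu>"
    and sk: "singular_kernel \<mu> \<nu> K"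
    and rb: "restrictedly_Lp_bounded p \<mu> \<nu> K C"
    and ri: "integrable lborel \<rho>"
  shows "restrictedly_Lp_bounded p \<mu> \<nu> (\<lambda>s t. K s t * (1 - fourier \<rho> ((1 / \<epsilon>) *\<^sub>R (t - s))))
         ((1 + L1_norm \<rho>) * C)"
  unfolding restrictedly_Lp_bounded_def
proof (intro allI impI)
  let ?Km = "kernel_measure \<mu> \<nu>"
  let ?L = "L1_norm \<rho>"
  fix f g :: "'a \<Rightarrow> complex"
  assume asm: "test_fun f \<and> test_fun g \<and> (\<exists>\<delta>>0. \<forall>x\<in>fsupp f. \<forall>y\<in>fsupp g. \<delta> \<le> dist x y)"
  then have tf: "test_fun f" and tg: "test_fun g" by simp_all
  from asm obtain \<delta> where d: "\<delta> > 0" "\<forall>x\<in>fsupp f. \<forall>y\<in>fsupp g. \<delta> \<le> dist x y" by (elim conjE exE) simp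
  let ?A = "Lp_norm p \<mu> f * Lp_norm (p / (p - 1)) \<nu> g"
  have rbd: "\<And>f g. test_fun f \<Longrightarrow> test_fun g \<Longrightarrow> (\<exists>\<delta>>0. \<forall>x\<in>fsupp f. \<forall>y\<in>fsupp g. \<delta> \<le> dist x y) \<Longrightarrow>
        norm (\<integral> z. K (fst z) (snd z) * f (snd z) * g (fst z) \<partial>?Km)
          \<le> C * Lp_norm p \<mu> f * Lp_norm (p / (p - 1)) \<nu> g"
    using rb unfolding restrictedly_Lp_bounded_def by simp
  define H where "H z = K (fst z) (snd z) * f (snd z) * g (fst z)" for z
  define \<phi> where "\<phi> z = fourier \<rho> ((1 / \<epsilon>) *\<^sub>R (snd z - fst z))" for z :: "'a \<times> 'a"
  have Hi: "integrable ?Km H" unfolding H_def[abs_def] by (rule H_integrable[OF rm sk tf tg d])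
  have Hm: "H \<in> borel_measurable ?Km" using Hi by (rule borel_measurable_integrable)
  have phm: "\<phi> \<in> borel_measurable ?Km"
    unfolding \<phi>_def[abs_def] by (rule phi_meas[OF rm ri])
  have b0: "norm (integral\<^sup>L ?Km H) \<le> C * ?A"
  proof -
    have ex: "\<exists>\<delta>>0. \<forall>x\<in>fsupp f. \<forall>y\<in>fsupp g. \<delta> \<le> dist x y" by (intro exI[of _ \<delta>] conjI d)
    show ?thesis using rbd[OF tf tg ex] unfolding H_def[abs_def] by (simp add: mult.assoc)
  qed
  have L0: "0 \<le> ?L" unfolding L1_norm_def by (rule integral_nonneg_AE) simp
  have phiHi: "integrable ?Km (\<lambda>z. \<phi> z * H z)"
  proof (rule Bochner_Integration.integrable_bound)
    show "integrable ?Km (\<lambda>z. complex_of_real ?L * H z)" by (rule integrable_mult_right) (rule Hi)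
    show "(\<lambda>z. \<phi> z * H z) \<in> borel_measurable ?Km" by (rule borel_measurable_times[OF phm Hm])
    show "AE z in ?Km. norm (\<phi> z * H z) \<le> norm (complex_of_real ?L * H z)"
    proof (rule AE_I2)
      fix z
      have "norm (\<phi> z) \<le> ?L" unfolding \<phi>_def by (rule fourier_bound)
      then have "norm (\<phi> z) * norm (H z) \<le> ?L * norm (H z)" by (rule mult_right_mono) simp
      then show "norm (\<phi> z * H z) \<le> norm (complex_of_real ?L * H z)"
        using L0 by (simp add: norm_mult)
    qed
  qed
  have eq1: "(\<integral> z. K (fst z) (snd z) * (1 - fourier \<rho> ((1 / \<epsilon>) *\<^sub>R (snd z - fst z))) * f (snd z) * g (fst z) \<partial>?Km)
      = integral\<^sup>L ?Km H - (\<integral> z. \<phi> z * H z \<partial>?Km)"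
  proof -
    have "(\<integral> z. K (fst z) (snd z) * (1 - fourier \<rho> ((1 / \<epsilon>) *\<^sub>R (snd z - fst z))) * f (snd z) * g (fst z) \<partial>?Km)
        = (\<integral> z. H z - \<phi> z * H z \<partial>?Km)"
      by (rule Bochner_Integration.integral_cong) (simp_all add: H_def \<phi>_def algebra_simps)
    also have "\<dots> = integral\<^sup>L ?Km H - (\<integral> z. \<phi> z * H z \<partial>?Km)"
      by (rule Bochner_Integration.integral_diff[OF Hi phiHi])
    finally show ?thesis .
  qed
  interpret P: pair_sigma_finite lborel ?Km
    by (intro pair_sigma_finite.intro sigma_finite_lborel km_sigma_finite[OF rm])
  define F where "F x z = \<rho> x * cis (- (((1 / \<epsilon>) *\<^sub>R (snd z - fst z)) \<bullet> x)) * H z" for x z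
  define fx where "fx x t = f t * cis (- ((1 / \<epsilon>) * (t \<bullet> x)))" for x t :: 'a
  define gx where "gx x s = g s * cis ((1 / \<epsilon>) * (s \<bullet> x))" for x s :: 'a
  have Feq: "F x z = \<rho> x * (K (fst z) (snd z) * fx x (snd z) * gx x (fst z))" for x z
    unfolding F_def H_def fx_def gx_def cis_split by (simp add: mult_ac)
  have tfx: "test_fun (fx x)" "fsupp (fx x) = fsupp f" "Lp_norm p \<mu> (fx x) = Lp_norm p \<mu> f" for x
    unfolding fx_def by (intro twist tf continuous_intros)+
  have tgx: "test_fun (gx x)" "fsupp (gx x) = fsupp g" "Lp_norm (p / (p - 1)) \<nu> (gx x) = Lp_norm (p / (p - 1)) \<nu> g" for x
    unfolding gx_def by (intro twist tg continuous_intros)+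
  have dx: "\<forall>a\<in>fsupp (fx x). \<forall>b\<in>fsupp (gx x). \<delta> \<le> dist a b" for x
    unfolding tfx(2) tgx(2) by (rule d(2))
  have Hxi: "integrable ?Km (\<lambda>z. K (fst z) (snd z) * fx x (snd z) * gx x (fst z))" for x
    by (rule H_integrable[OF rm sk tfx(1) tgx(1) d(1) dx])
  have bx: "norm (\<integral> z. K (fst z) (snd z) * fx x (snd z) * gx x (fst z) \<partial>?Km) \<le> C * ?A" for x
  proof -
    have "\<exists>\<delta>>0. \<forall>a\<in>fsupp (fx x). \<forall>b\<in>fsupp (gx x). \<delta> \<le> dist a b" by (intro exI[of _ \<delta>] conjI d(1) dx)
    from rbd[OF tfx(1) tgx(1) this] show ?thesis unfolding tfx(3) tgx(3) by (simp add: mult.assoc)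
  qed
  have Fm: "(\<lambda>w. F (fst w) (snd w)) \<in> borel_measurable (lborel \<Otimes>\<^sub>M ?Km)"
    unfolding F_def by (rule F_meas[OF rm ri Hm])
  have inner: "(\<integral> z. F x z \<partial>?Km) = \<rho> x * (\<integral> z. K (fst z) (snd z) * fx x (snd z) * gx x (fst z) \<partial>?Km)" for x
    unfolding Feq by (rule integral_mult_right_zero)
  have Fi: "integrable (lborel \<Otimes>\<^sub>M ?Km) (\<lambda>(x, z). F x z)"
  proof (rule P.Fubini_integrable)
    show "(\<lambda>(x, z). F x z) \<in> borel_measurable (lborel \<Otimes>\<^sub>M ?Km)" unfolding case_prod_beta' by (rule Fm)
    have ni: "(\<integral> z. norm ((\<lambda>(x, z). F x z) (x, z)) \<partial>?Km) = norm (\<rho> x) * (\<integral> z. norm (H z) \<partial>?Km)" for x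
    proof -
      have "(\<integral> z. norm ((\<lambda>(x, z). F x z) (x, z)) \<partial>?Km) = (\<integral> z. norm (\<rho> x) * norm (H z) \<partial>?Km)"
        by (rule Bochner_Integration.integral_cong) (simp_all add: F_def norm_mult)
      also have "\<dots> = norm (\<rho> x) * (\<integral> z. norm (H z) \<partial>?Km)" by (rule integral_mult_right_zero)
      finally show ?thesis .
    qed
    show "integrable lborel (\<lambda>x. \<integral> z. norm ((\<lambda>(x, z). F x z) (x, z)) \<partial>?Km)"
      unfolding ni by (intro integrable_mult_left integrable_norm ri)
    show "AE x in lborel. integrable ?Km (\<lambda>z. (\<lambda>(x, z). F x z) (x, z))"
    proof (rule AE_I2)
      fix x
      have "integrable ?Km (\<lambda>z. \<rho> x * (K (fst z) (snd z) * fx x (snd z) * gx x (fst z)))"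
        by (rule integrable_mult_right) (rule Hxi)
      then show "integrable ?Km (\<lambda>z. (\<lambda>(x, z). F x z) (x, z))" by (simp add: Feq)
    qed
  qed
  have eq2: "(\<integral> z. \<phi> z * H z \<partial>?Km) = (\<integral> x. (\<integral> z. F x z \<partial>?Km) \<partial>lborel)"
  proof -
    have "(\<integral> z. \<phi> z * H z \<partial>?Km) = (\<integral> z. (\<integral> x. F x z \<partial>lborel) \<partial>?Km)"
      by (rule Bochner_Integration.integral_cong) (simp_all add: \<phi>_def fourier_def F_def integral_mult_left_zero)
    also have "\<dots> = (\<integral> x. (\<integral> z. F x z \<partial>?Km) \<partial>lborel)"
      by (rule P.Fubini_integral[OF Fi])
    finally show ?thesis .
  qed
  have Gi: "integrable lborel (\<lambda>x. \<integral> z. F x z \<partial>?Km)"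
    using P.integrable_fst'[OF Fi] by simp
  have b1: "norm (\<integral> z. \<phi> z * H z \<partial>?Km) \<le> ?L * (C * ?A)"
  proof -
    have "norm (\<integral> z. \<phi> z * H z \<partial>?Km) \<le> (\<integral> x. norm (\<integral> z. F x z \<partial>?Km) \<partial>lborel)"
      unfolding eq2 by (rule integral_norm_bound)
    also have "\<dots> \<le> (\<integral> x. norm (\<rho> x) * (C * ?A) \<partial>lborel)"
    proof (rule integral_mono)
      show "integrable lborel (\<lambda>x. norm (\<integral> z. F x z \<partial>?Km))" by (rule integrable_norm[OF Gi])
      show "integrable lborel (\<lambda>x. norm (\<rho> x) * (C * ?A))" by (intro integrable_mult_left integrable_norm ri)
      fix x
      have "norm (\<integral> z. F x z \<partial>?Km) = norm (\<rho> x) * norm (\<integral> z. K (fst z) (snd z) * fx x (snd z) * gx x (fst z) \<partial>?Km)"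
        unfolding inner by (rule norm_mult)
      also have "\<dots> \<le> norm (\<rho> x) * (C * ?A)" by (rule mult_left_mono[OF bx]) simp
      finally show "norm (\<integral> z. F x z \<partial>?Km) \<le> norm (\<rho> x) * (C * ?A)" .
    qed
    also have "\<dots> = ?L * (C * ?A)" unfolding L1_norm_def by (rule integral_mult_left_zero)
    finally show ?thesis .
  qed
  have "norm (\<integral> z. K (fst z) (snd z) * (1 - fourier \<rho> ((1 / \<epsilon>) *\<^sub>R (snd z - fst z))) * f (snd z) * g (fst z) \<partial>?Km)
      \<le> norm (integral\<^sup>L ?Km H) + norm (\<integral> z. \<phi> z * H z \<partial>?Km)"
    unfolding eq1 by (rule norm_triangle_ineq4)
  also have "\<dots> \<le> C * ?A + ?L * (C * ?A)" using b0 b1 by (rule add_mono)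
  also have "\<dots> = (1 + ?L) * C * Lp_norm p \<mu> f * Lp_norm (p / (p - 1)) \<nu> g" by (simp add: algebra_simps)
  finally show "norm (\<integral> z. K (fst z) (snd z) * (1 - fourier \<rho> ((1 / \<epsilon>) *\<^sub>R (snd z - fst z))) * f (snd z) * g (fst z) \<partial>?Km)
      \<le> (1 + ?L) * C * Lp_norm p \<mu> f * Lp_norm (p / (p - 1)) \<nu> g" .
qed


theorem lemma2p1:
  fixes \<mu> \<nu> :: "'a::euclidean_space measure"
    and K :: "'a \<Rightarrow> 'a \<Rightarrow> complex" and \<rho> :: "'a \<Rightarrow> complex"
    and p C \<epsilon> :: real
  assumes "1 < p"
    and "radon_measure \<mu>" and "radon_measure \<nu>"
    and "singular_kernel \<mu> \<nu> K"
    and "restrictedly_Lp_bounded p \<mu> \<nu> K C"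
    and "integrable lborel \<rho>"
    and "0 < \<epsilon>"
  shows "singular_kernel \<mu> \<nu> (\<lambda>s t. K s t * (1 - fourier \<rho> ((1 / \<epsilon>) *\<^sub>R (t - s))))
    \<and> restrictedly_Lp_bounded p \<mu> \<nu> (\<lambda>s t. K s t * (1 - fourier \<rho> ((1 / \<epsilon>) *\<^sub>R (t - s))))
         ((1 + L1_norm \<rho>) * C)"
  using part1[OF assms(2,3,4,6)] part2[OF assms(2,3,4,5,6)] by (rule conjI)

end
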